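(* Let $n \ge 2$. (a) If $n\in\{2,3\}$, then $\dim_{1,f}(P_n)=1$; if $n\in\{4,5\}$, then $\dim_{1,f}(P_n)=\frac{8-n}{7-n}$. (b) If $n\ge 6$, then $\dim_{1,f}(P_n)=\frac{n+1}{4}$ if $n\equiv1 \pmod4$, and $\dim_{1,f}(P_n)=\lceil\frac{n}{4}\rceil$ if $n\equiv2$ or $3\pmod4$. (c) If $n\ge 8$ and $n\equiv0 \pmod4$, then $\frac{n}{4}\le\dim_{1,f}(P_n)\le\frac{n+2}{4}$.
   Context: $P_n$ is the path on $n$ vertices. $d(x,y)$ is the distance in $G$. $d_1(x,y)=\min\{d(x,y),2\}$ and $R_1\{x,y\}=\{z\in V(G): d_1(x,z)\neq d_1(y,z)\}$. For a function $g$ on $V(G)$ and $U\subseteq V(G)$, $g(U)=\sum_{s\in U}g(s)$. A function $h:V(G)\to[0,1]$ is a $1$-truncated resolving function of $G$ if $h(R_1\{x,y\})\ge 1$ for all distinct $x,y\in V(G)$; $\dim_{1,f}(G)$ is the minimum of $h(V(G))$ over all such $h$. *)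

theory Defs
  imports Complex_Main
begin

text \<open>Path P_n on vertex set {0..<n}, edges between i and i+1; its graph
distance is |i - j|.\<close>

definition path_dist :: "nat \<Rightarrow> nat \<Rightarrow> nat" where
  "path_dist x y = (if x \<le> y then y - x else x - y)"

definition trunc1_dist :: "('a \<Rightarrow> 'a \<Rightarrow> nat) \<Rightarrow> 'a \<Rightarrow> 'a \<Rightarrow> nat" where
  "trunc1_dist d x y = min (d x y) 2"

definition R1 :: "'a set \<Rightarrow> ('a \<Rightarrow> 'a \<Rightarrow> nat) \<Rightarrow> 'a \<Rightarrow> 'a \<Rightarrow> 'a set" where
  "R1 V d x y = {z \<in> V. trunc1_dist d x z \<noteq> trunc1_dist d y z}"

definition trunc1_resolving_function ::
  "'a set \<Rightarrow> ('a \<Rightarrow> 'a \<Rightarrow> nat) \<Rightarrow> ('a \<Rightarrow> real) \<Rightarrow> bool" where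
  "trunc1_resolving_function V d h \<longleftrightarrow>
     (\<forall>v\<in>V. 0 \<le> h v \<and> h v \<le> 1) \<and>
     (\<forall>x\<in>V. \<forall>y\<in>V. x \<noteq> y \<longrightarrow> sum h (R1 V d x y) \<ge> 1)"

text \<open>The minimum of h(V) over all 1-truncated resolving functions
(written as Inf; the minimum is attained for finite V).\<close>

definition frac_trunc1_dim :: "'a set \<Rightarrow> ('a \<Rightarrow> 'a \<Rightarrow> nat) \<Rightarrow> real" where
  "frac_trunc1_dim V d = Inf {sum h V | h. trunc1_resolving_function V d h}"

definition path_dim1f :: "nat \<Rightarrow> real" where
  "path_dim1f n = frac_trunc1_dim {0..<n} path_dist"

end

theory Submission
  imports Defs
begin

lemma mem_R1:
  "z \<in> R1 {0..<n} path_dist x y \<longleftrightarrow>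
     z < n \<and> min (path_dist x z) 2 \<noteq> min (path_dist y z) 2"
  by (simp add: R1_def trunc1_dist_def)

lemma R1_sym: "R1 V d x y = R1 V d y x"
  unfolding R1_def by auto

lemma R1_fin: "finite (R1 {0..<n} path_dist x y)"
  by (rule finite_subset[of _ "{0..<n}"]) (auto simp: R1_def)

lemma resolving_intro:
  assumes "\<And>v. v < n \<Longrightarrow> 0 \<le> h v \<and> h v \<le> 1"
    and "\<And>x y. x < y \<Longrightarrow> y < n \<Longrightarrow> 1 \<le> sum h (R1 {0..<n} path_dist x y)"
  shows "trunc1_resolving_function {0..<n} path_dist h"
  unfolding trunc1_resolving_function_def
proof (intro conjI ballI impI)
  fix v assume "v \<in> {0..<n}" then show "0 \<le> h v" "h v \<le> 1" using assms(1) by auto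
next
  fix x y assume xy: "x \<in> {0..<n}" "y \<in> {0..<n}" "x \<noteq> y"
  show "1 \<le> sum h (R1 {0..<n} path_dist x y)"
  proof (cases "x < y")
    case True then show ?thesis using assms(2) xy by auto
  next
    case False then have "y < x" using xy by auto
    then show ?thesis using assms(2)[of y x] xy R1_sym[of "{0..<n}" path_dist x y] by auto
  qed
qed

lemma sub_sum:
  fixes h :: "nat \<Rightarrow> real"
  assumes "S \<subseteq> R1 {0..<n} path_dist x y" "\<And>v. v < n \<Longrightarrow> 0 \<le> h v"
  shows "sum h S \<le> sum h (R1 {0..<n} path_dist x y)"
  by (rule sum_mono2[OF R1_fin assms(1)]) (use assms(2) in \<open>auto simp: R1_def\<close>)

lemma sum2: "a \<noteq> b \<Longrightarrow> sum h {a,b} = h a + h b" by simp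
lemma sum3: "distinct [a,b,c] \<Longrightarrow> sum h {a,b,c} = h a + h b + h c" by (simp add: add.assoc)
lemma sum4: "distinct [a,b,c,d] \<Longrightarrow> sum h {a,b,c,d} = h a + h b + h c + h d" by (simp add: add.assoc)

lemma res_facts:
  assumes "trunc1_resolving_function {0..<n} path_dist h"
  shows "\<And>v. v < n \<Longrightarrow> 0 \<le> h v"
    and "\<And>x y. x < n \<Longrightarrow> y < n \<Longrightarrow> x \<noteq> y \<Longrightarrow> 1 \<le> sum h (R1 {0..<n} path_dist x y)"
  using assms unfolding trunc1_resolving_function_def by auto

lemma constraint_sub:
  assumes "trunc1_resolving_function {0..<n} path_dist h"
    and "x < n" "y < n" "x \<noteq> y" "R1 {0..<n} path_dist x y \<subseteq> S" "S \<subseteq> {0..<n}"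
  shows "1 \<le> sum h S"
proof -
  have "sum h (R1 {0..<n} path_dist x y) \<le> sum h S"
    apply (rule sum_mono2)
    using assms(5,6) res_facts(1)[OF assms(1)] by (auto intro: finite_subset)
  then show ?thesis using res_facts(2)[OF assms(1) assms(2-4)] by linarith
qed

lemma window:
  assumes "trunc1_resolving_function {0..<n} path_dist h" "a + 4 \<le> n"
  shows "1 \<le> sum h {a..<a+4}"
  apply (rule constraint_sub[OF assms(1), of "a+1" "a+2"])
  using assms(2) by (auto simp: mem_R1 path_dist_def split: if_splits)

lemma block:
  assumes "trunc1_resolving_function {0..<n} path_dist h"
  shows "a + 4 * j \<le> n \<Longrightarrow> real j \<le> sum h {a..<a+4*j}"
proof (induction j)
  case 0 then show ?case by simp
next
  case (Suc j)
  have "sum h {a..<a+4*j} + sum h {a+4*j..<a+4*j+4} = sum h {a..<a+4*j+4}"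
    by (rule sum.atLeastLessThan_concat) auto
  moreover have "1 \<le> sum h {a+4*j..<a+4*j+4}"
    using window[OF assms, of "a+4*j"] Suc.prems by auto
  moreover have "real j \<le> sum h {a..<a+4*j}" using Suc by auto
  ultimately have "real (Suc j) \<le> sum h {a..<a+4*j+4}" by simp
  moreover have "a+4*Suc j = a+4*j+4" by simp
  ultimately show ?case by metis
qed

lemma left_end:
  assumes "trunc1_resolving_function {0..<n} path_dist h" "3 \<le> n"
  shows "1 \<le> sum h {0..<3}"
  apply (rule constraint_sub[OF assms(1), of 0 1])
  using assms(2) by (auto simp: mem_R1 path_dist_def split: if_splits)

lemma right_end:
  assumes "trunc1_resolving_function {0..<n} path_dist h" "3 \<le> n"
  shows "1 \<le> sum h {n-3..<n}"
  apply (rule constraint_sub[OF assms(1), of "n-2" "n-1"])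
  using assms(2) by (auto simp: mem_R1 path_dist_def split: if_splits)

lemma both_ends:
  assumes "trunc1_resolving_function {0..<n} path_dist h" "5 \<le> n"
  shows "1 \<le> sum h {0..<2} + sum h {n-2..<n}"
proof -
  have "1 \<le> sum h ({0..<2} \<union> {n-2..<n})"
    apply (rule constraint_sub[OF assms(1), of 0 "n-1"])
    using assms(2) by (auto simp: mem_R1 path_dist_def split: if_splits)
  moreover have "sum h ({0..<2} \<union> {n-2..<n}) = sum h {0..<2} + sum h {n-2..<n}"
    by (rule sum.union_disjoint) (use assms(2) in auto)
  ultimately show ?thesis by simp
qed


lemma L_x: "x \<noteq> y \<Longrightarrow> x < n \<Longrightarrow> x \<in> R1 {0..<n} path_dist x y"
  by (auto simp: mem_R1 path_dist_def)
lemma L_y: "x \<noteq> y \<Longrightarrow> y < n \<Longrightarrow> y \<in> R1 {0..<n} path_dist x y"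
  by (auto simp: mem_R1 path_dist_def)
lemma L_xm: "x < y \<Longrightarrow> y < n \<Longrightarrow> 1 \<le> x \<Longrightarrow> x - 1 \<in> R1 {0..<n} path_dist x y"
  by (auto simp: mem_R1 path_dist_def)
lemma L_yp: "x < y \<Longrightarrow> y + 1 < n \<Longrightarrow> y + 1 \<in> R1 {0..<n} path_dist x y"
  by (auto simp: mem_R1 path_dist_def)
lemma L_xp: "x + 3 \<le> y \<Longrightarrow> y < n \<Longrightarrow> x + 1 \<in> R1 {0..<n} path_dist x y"
  by (auto simp: mem_R1 path_dist_def)
lemma L_ym: "x + 3 \<le> y \<Longrightarrow> y < n \<Longrightarrow> y - 1 \<in> R1 {0..<n} path_dist x y"
  by (auto simp: mem_R1 path_dist_def)
lemma L_adj: "x + 2 < n \<Longrightarrow> x + 2 \<in> R1 {0..<n} path_dist x (x+1)"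
  by (auto simp: mem_R1 path_dist_def)
lemma L_d2: "x + 3 < n \<Longrightarrow> x + 3 \<in> R1 {0..<n} path_dist x (x+2)"
  by (auto simp: mem_R1 path_dist_def)

lemma pick2:
  fixes h :: "nat \<Rightarrow> real"
  assumes "u \<in> R1 {0..<n} path_dist x y" "v \<in> R1 {0..<n} path_dist x y"
    "u \<noteq> v" "\<And>z. z < n \<Longrightarrow> 0 \<le> h z"
  shows "h u + h v \<le> sum h (R1 {0..<n} path_dist x y)"
  using sub_sum[of "{u,v}" n x y h] assms sum2[OF assms(3), of h] by simp

lemma pick3:
  fixes h :: "nat \<Rightarrow> real"
  assumes "u \<in> R1 {0..<n} path_dist x y" "v \<in> R1 {0..<n} path_dist x y"
     "w \<in> R1 {0..<n} path_dist x y" "distinct [u,v,w]" "\<And>z. z < n \<Longrightarrow> 0 \<le> h z"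
  shows "h u + h v + h w \<le> sum h (R1 {0..<n} path_dist x y)"
  using sub_sum[of "{u,v,w}" n x y h] assms sum3[OF assms(4), of h] by simp

lemma pick4:
  fixes h :: "nat \<Rightarrow> real"
  assumes "u \<in> R1 {0..<n} path_dist x y" "v \<in> R1 {0..<n} path_dist x y"
     "w \<in> R1 {0..<n} path_dist x y" "t \<in> R1 {0..<n} path_dist x y"
     "distinct [u,v,w,t]" "\<And>z. z < n \<Longrightarrow> 0 \<le> h z"
  shows "h u + h v + h w + h t \<le> sum h (R1 {0..<n} path_dist x y)"
  using sub_sum[of "{u,v,w,t}" n x y h] assms sum4[OF assms(5), of h] by simp


definition ho :: "nat \<Rightarrow> real" where "ho z = (if even z then 1/2 else 0)"

lemma odd_res:
  assumes "odd n"
  shows "trunc1_resolving_function {0..<n} path_dist ho"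
proof (rule resolving_intro)
  fix v show "0 \<le> ho v \<and> ho v \<le> 1" by (simp add: ho_def)
next
  fix x y assume xy: "x < y" "y < n"
  have nn: "\<And>z. z < n \<Longrightarrow> 0 \<le> ho z" by (simp add: ho_def)
  have "\<exists>u v. u \<in> R1 {0..<n} path_dist x y \<and> v \<in> R1 {0..<n} path_dist x y
          \<and> u \<noteq> v \<and> even u \<and> even v"
  proof (cases "y = x + 1")
    case True
    show ?thesis
    proof (cases "even x")
      case ev: True
      have "x + 2 < n"
      proof (rule ccontr)
        assume "\<not> x + 2 < n"
        then have "n = x + 2" using xy True by simp
        then show False using assms ev by simp
      qed
      then show ?thesis using ev True L_x[of x y n] L_adj[of x n] xy
        by (intro exI[of _ x] exI[of _ "x+2"]) auto
    next
      case False
      then have "x \<ge> 1" by (cases x) auto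
      then show ?thesis using False True L_xm[of x y n] L_y[of x y n] xy
        by (intro exI[of _ "x-1"] exI[of _ "x+1"]) auto
    qed
  next
    case ne1: False
    show ?thesis
    proof (cases "y = x + 2")
      case True
      show ?thesis
      proof (cases "even x")
        case ev: True
        then show ?thesis using True L_x[of x y n] L_y[of x y n] xy
          by (intro exI[of _ x] exI[of _ "x+2"]) auto
      next
        case False
        then have "x \<ge> 1" by (cases x) auto
        have "x + 3 < n"
        proof (rule ccontr)
          assume "\<not> x + 3 < n"
          then have "n = x + 3" using xy True by simp
          then show False using assms False by simp
        qed
        then show ?thesis using False True \<open>x \<ge> 1\<close> L_xm[of x y n] L_d2[of x n] xy
          by (intro exI[of _ "x-1"] exI[of _ "x+3"]) auto
      qed
    next
      case False
      then have far: "x + 3 \<le> y" using ne1 xy by auto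
      have x1: "x \<ge> 1" if "odd x" using that by (cases x) auto
      have y1: "y \<ge> 1" if "odd y" using that by (cases y) auto
      obtain u where u: "u \<in> R1 {0..<n} path_dist x y" "even u" "u \<le> x"
        using L_x[of x y n] L_xm[of x y n] x1 xy by (cases "even x") (auto intro: exI[of _ x] exI[of _ "x-1"])
      obtain v where v: "v \<in> R1 {0..<n} path_dist x y" "even v" "v \<ge> y - 1"
        using L_y[of x y n] L_ym[of x y n] y1 xy far by (cases "even y") (auto intro: exI[of _ y] exI[of _ "y-1"])
      show ?thesis using u v far by (intro exI[of _ u] exI[of _ v]) auto
    qed
  qed
  then obtain u v where uv: "u \<in> R1 {0..<n} path_dist x y" "v \<in> R1 {0..<n} path_dist x y"
     "u \<noteq> v" "even u" "even v" by blast
  show "1 \<le> sum ho (R1 {0..<n} path_dist x y)"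
    using pick2[where h=ho, OF uv(1,2,3) nn] uv(4,5) by (simp add: ho_def)
qed

lemma ho_sum_aux: "sum ho {..<2*m+1} = (real m + 1) / 2"
proof (induction m)
  case 0 then show ?case by (simp add: ho_def)
next
  case (Suc m)
  have "sum ho {..<2 * Suc m + 1} = sum ho {..<Suc (Suc (2*m+1))}" by simp
  also have "\<dots> = sum ho {..<2*m+1} + ho (2*m+1) + ho (2*m+2)"
    by (simp add: add.assoc)
  finally show ?case using Suc by (simp add: ho_def)
qed

lemma ho_sum: "odd n \<Longrightarrow> sum ho {0..<n} = (real n + 1) / 4"
proof -
  assume "odd n"
  then obtain m where m: "n = 2*m+1" by (metis oddE)
  then show ?thesis using ho_sum_aux[of m] by (simp add: atLeast0LessThan)
qed


definition he :: "nat \<Rightarrow> nat \<Rightarrow> real" where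
  "he n z = 1/4 + (if z = 0 then 1/4 else 0) + (if z = n - 1 then 1/4 else 0)"

lemma he_ge: "1/4 \<le> he n z" by (simp add: he_def)
lemma he_0: "1/2 \<le> he n 0" by (simp add: he_def)
lemma he_last: "z = n - 1 \<Longrightarrow> 1/2 \<le> he n z" by (simp add: he_def)

lemma even_res:
  assumes "even n" "2 \<le> n"
  shows "trunc1_resolving_function {0..<n} path_dist (he n)"
proof (rule resolving_intro)
  fix v show "0 \<le> he n v \<and> he n v \<le> 1" by (simp add: he_def)
next
  fix x y assume xy: "x < y" "y < n"
  have nn: "\<And>z. z < n \<Longrightarrow> 0 \<le> he n z" by (simp add: he_def)
  note g = he_ge[of n]
  show "1 \<le> sum (he n) (R1 {0..<n} path_dist x y)"
  proof (cases "y = x + 1")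
    case True
    show ?thesis
    proof (cases "x = 0")
      case x0: True
      show ?thesis
      proof (cases "n = 2")
        case True
        have "he n 0 + he n 1 \<le> sum (he n) (R1 {0..<n} path_dist x y)"
          by (rule pick2[where h="he n"]) (use L_x[of x y n] L_y[of x y n] xy x0 \<open>y = x+1\<close> nn in auto)
        then show ?thesis using he_0[of n] he_last[of 1 n] True by linarith
      next
        case False
        have "he n x + he n (x+1) + he n (x+2) \<le> sum (he n) (R1 {0..<n} path_dist x y)"
          by (rule pick3[where h="he n"]) (use L_x[of x y n] L_y[of x y n] L_adj[of x n] xy x0 \<open>y = x+1\<close> nn False in auto)
        moreover have "1/2 \<le> he n x" using x0 he_0[of n] by simp
        ultimately show ?thesis using g[of "x+1"] g[of "x+2"] by linarith
      qed
    next
      case False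
      then have x1: "x \<ge> 1" by simp
      show ?thesis
      proof (cases "x + 2 = n")
        case True
        have "he n (x-1) + he n x + he n (x+1) \<le> sum (he n) (R1 {0..<n} path_dist x y)"
          by (rule pick3[where h="he n"]) (use L_x[of x y n] L_y[of x y n] L_xm[of x y n] xy x1 \<open>y = x+1\<close> nn in auto)
        then show ?thesis using he_last[of "x+1" n] g[of "x-1"] g[of x] True by linarith
      next
        case False
        have "he n (x-1) + he n x + he n (x+1) + he n (x+2) \<le> sum (he n) (R1 {0..<n} path_dist x y)"
          by (rule pick4[where h="he n"]) (use L_x[of x y n] L_y[of x y n] L_xm[of x y n] L_adj[of x n] xy x1 \<open>y = x+1\<close> nn False in auto)
        then show ?thesis using g[of "x-1"] g[of x] g[of "x+1"] g[of "x+2"] by linarith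
      qed
    qed
  next
    case ne1: False
    show ?thesis
    proof (cases "y = x + 2")
      case True
      show ?thesis
      proof (cases "x = 0")
        case x0: True
        have "3 < n"
        proof (rule ccontr)
          assume "\<not> 3 < n" then have "n = 3" using xy True x0 by simp
          then show False using assms by simp
        qed
        have "he n x + he n (x+2) + he n (x+3) \<le> sum (he n) (R1 {0..<n} path_dist x y)"
          by (rule pick3[where h="he n"]) (use L_x[of x y n] L_y[of x y n] L_d2[of x n] xy x0 True nn \<open>3 < n\<close> in auto)
        moreover have "1/2 \<le> he n x" using x0 he_0[of n] by simp
        ultimately show ?thesis using g[of "x+2"] g[of "x+3"] by linarith
      next
        case False
        then have x1: "x \<ge> 1" by simp
        show ?thesis
        proof (cases "x + 3 = n")
          case c: True
          have "he n (x-1) + he n x + he n (x+2) \<le> sum (he n) (R1 {0..<n} path_dist x y)"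
            by (rule pick3[where h="he n"]) (use L_x[of x y n] L_y[of x y n] L_xm[of x y n] xy x1 True nn in auto)
          then show ?thesis using he_last[of "x+2" n] g[of "x-1"] g[of x] c by linarith
        next
          case c: False
          have "he n (x-1) + he n x + he n (x+2) + he n (x+3) \<le> sum (he n) (R1 {0..<n} path_dist x y)"
            by (rule pick4[where h="he n"]) (use L_x[of x y n] L_y[of x y n] L_xm[of x y n] L_d2[of x n] xy x1 True nn c in auto)
          then show ?thesis using g[of "x-1"] g[of x] g[of "x+2"] g[of "x+3"] by linarith
        qed
      qed
    next
      case False
      then have far: "x + 3 \<le> y" using ne1 xy by auto
      obtain a where a: "a \<in> R1 {0..<n} path_dist x y" "a < x \<or> a = x + 1"
        using L_xm[of x y n] L_xp[of x y n] xy far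
        by (cases "x = 0") (auto intro: exI[of _ "x+1"] exI[of _ "x-1"])
      obtain b where b: "b \<in> R1 {0..<n} path_dist x y" "b > y \<or> b = y - 1"
        using L_yp[of x y n] L_ym[of x y n] xy far
        by (cases "y + 1 < n") (auto intro: exI[of _ "y+1"] exI[of _ "y-1"])
      have "he n a + he n x + he n y + he n b \<le> sum (he n) (R1 {0..<n} path_dist x y)"
        by (rule pick4[where h="he n"]) (use L_x[of x y n] L_y[of x y n] a b xy far nn in auto)
      then show ?thesis using g[of a] g[of x] g[of y] g[of b] by linarith
    qed
  qed
qed

lemma he_sum: "1 \<le> n \<Longrightarrow> sum (he n) {0..<n} = (real n + 2) / 4"
  unfolding he_def by (simp add: sum.distrib)

definition hc :: "nat \<Rightarrow> real" where "hc z = 1/3"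

lemma four_res: "trunc1_resolving_function {0..<4} path_dist hc"
proof (rule resolving_intro)
  fix v show "0 \<le> hc v \<and> hc v \<le> 1" by (simp add: hc_def)
next
  fix x y :: nat assume xy: "x < y" "y < 4"
  have nn: "\<And>z. z < 4 \<Longrightarrow> 0 \<le> hc z" by (simp add: hc_def)
  have "\<exists>u v w. u \<in> R1 {0..<4} path_dist x y \<and> v \<in> R1 {0..<4} path_dist x y
     \<and> w \<in> R1 {0..<4} path_dist x y \<and> distinct [u,v,w]"
  proof -
    consider "y = x + 1" "x = 0" | "y = x + 1" "x \<ge> 1" | "y = x + 2" "x = 0" | "y = x + 2" "x \<ge> 1"
      | "x + 3 \<le> y" using xy by linarith
    then show ?thesis
    proof cases
      case 1 then show ?thesis using L_x[of x y 4] L_y[of x y 4] L_adj[of x 4] xy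
        by (intro exI[of _ x] exI[of _ y] exI[of _ "x+2"]) auto
    next
      case 2 then show ?thesis using L_x[of x y 4] L_y[of x y 4] L_xm[of x y 4] xy
        by (intro exI[of _ x] exI[of _ y] exI[of _ "x-1"]) auto
    next
      case 3 then show ?thesis using L_x[of x y 4] L_y[of x y 4] L_d2[of x 4] xy
        by (intro exI[of _ x] exI[of _ y] exI[of _ "x+3"]) auto
    next
      case 4 then show ?thesis using L_x[of x y 4] L_y[of x y 4] L_xm[of x y 4] xy
        by (intro exI[of _ x] exI[of _ y] exI[of _ "x-1"]) auto
    next
      case 5 then show ?thesis using L_x[of x y 4] L_y[of x y 4] L_xp[of x y 4] xy
        by (intro exI[of _ x] exI[of _ y] exI[of _ "x+1"]) auto
    qed
  qed
  then obtain u v w where uvw: "u \<in> R1 {0..<4} path_dist x y" "v \<in> R1 {0..<4} path_dist x y"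
     "w \<in> R1 {0..<4} path_dist x y" "distinct [u,v,w]" by blast
  show "1 \<le> sum hc (R1 {0..<4} path_dist x y)"
    using pick3[where h=hc, OF uvw nn] by (simp add: hc_def)
qed

lemma hc_sum: "sum hc {0..<4} = 4/3" by (simp add: hc_def)


lemma set_bdd: "bdd_below {sum h {0..<n} | h. trunc1_resolving_function {0..<n} path_dist h}"
  unfolding bdd_below_def
  by (rule exI[of _ 0]) (auto simp: trunc1_resolving_function_def intro!: sum_nonneg)

lemma dim_eq:
  assumes "trunc1_resolving_function {0..<n} path_dist h0" "sum h0 {0..<n} = c"
    "\<And>h. trunc1_resolving_function {0..<n} path_dist h \<Longrightarrow> c \<le> sum h {0..<n}"
  shows "path_dim1f n = c"
  unfolding path_dim1f_def frac_trunc1_dim_def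
  by (rule cInf_eq_minimum) (use assms in auto)

lemma dim_ge:
  assumes "trunc1_resolving_function {0..<n} path_dist h0"
    "\<And>h. trunc1_resolving_function {0..<n} path_dist h \<Longrightarrow> c \<le> sum h {0..<n}"
  shows "c \<le> path_dim1f n"
  unfolding path_dim1f_def frac_trunc1_dim_def
  by (rule cInf_greatest) (use assms in auto)

lemma dim_le:
  assumes "trunc1_resolving_function {0..<n} path_dist h0" "sum h0 {0..<n} \<le> c"
  shows "path_dim1f n \<le> c"
  unfolding path_dim1f_def frac_trunc1_dim_def
  by (rule cInf_lower2[OF _ _ set_bdd]) (use assms in auto)

lemma lb_small:
  assumes "trunc1_resolving_function {0..<n} path_dist h" "2 \<le> n"
  shows "1 \<le> sum h {0..<n}"
  by (rule constraint_sub[OF assms(1), of 0 1]) (use assms(2) in \<open>auto simp: R1_def\<close>)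

lemma less4: "(z::nat) < 4 \<longleftrightarrow> z = 0 \<or> z = 1 \<or> z = 2 \<or> z = 3" by auto
lemma less5: "(z::nat) < 5 \<longleftrightarrow> z = 0 \<or> z = 1 \<or> z = 2 \<or> z = 3 \<or> z = 4" by auto

lemma lb4:
  assumes r: "trunc1_resolving_function {0..<4} path_dist h"
  shows "4/3 \<le> sum h {0..<4}"
proof -
  have V: "{0..<4::nat} = {0,1,2,3}" by auto
  have "1 \<le> sum h {0,1,2}"
    by (rule constraint_sub[OF r, of 0 1]) (auto simp: mem_R1 path_dist_def less4)
  moreover have "1 \<le> sum h {1,2,3}"
    by (rule constraint_sub[OF r, of 2 3]) (auto simp: mem_R1 path_dist_def less4)
  moreover have "1 \<le> sum h {0,2,3}"
    by (rule constraint_sub[OF r, of 0 2]) (auto simp: mem_R1 path_dist_def less4)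
  moreover have "1 \<le> sum h {0,1,3}"
    by (rule constraint_sub[OF r, of 1 3]) (auto simp: mem_R1 path_dist_def less4)
  ultimately show ?thesis unfolding V by simp
qed

lemma lb5:
  assumes r: "trunc1_resolving_function {0..<5} path_dist h"
  shows "3/2 \<le> sum h {0..<5}"
proof -
  have V: "{0..<5::nat} = {0,1,2,3,4}" by auto
  have "1 \<le> sum h {0,1,2}"
    by (rule constraint_sub[OF r, of 0 1]) (auto simp: mem_R1 path_dist_def less5)
  moreover have "1 \<le> sum h {2,3,4}"
    by (rule constraint_sub[OF r, of 3 4]) (auto simp: mem_R1 path_dist_def less5)
  moreover have "1 \<le> sum h {0,1,3,4}"
    by (rule constraint_sub[OF r, of 0 4]) (auto simp: mem_R1 path_dist_def less5)
  ultimately show ?thesis unfolding V by simp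
qed

lemma split3:
  fixes a b c d :: nat and h :: "nat \<Rightarrow> real"
  shows "a \<le> b \<Longrightarrow> b \<le> c \<Longrightarrow> c \<le> d \<Longrightarrow>
   sum h {a..<d} = sum h {a..<b} + sum h {b..<c} + sum h {c..<d}"
proof -
  assume a: "a \<le> b" "b \<le> c" "c \<le> d"
  have "sum h {a..<c} = sum h {a..<b} + sum h {b..<c}"
    using sum.atLeastLessThan_concat[of a b c h] a by simp
  moreover have "sum h {a..<d} = sum h {a..<c} + sum h {c..<d}"
    using sum.atLeastLessThan_concat[of a c d h] a by simp
  ultimately show ?thesis by simp
qed

lemma lb_1mod4:
  assumes r: "trunc1_resolving_function {0..<n} path_dist h" and n: "n = 4*k+1" "1 \<le> k"
  shows "real k + 1/2 \<le> sum h {0..<n}"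
proof -
  have e: "1 \<le> sum h {0..<2} + sum h {n-2..<n}" using both_ends[OF r] n by simp
  have km: "real (k-1) = real k - 1" using n(2) by (simp add: of_nat_diff)
  have eq1: "3+4*(k-1) = n-2" using n by simp
  have eq2: "2+4*(k-1) = n-3" using n by simp
  have s1: "sum h {0..<n} = sum h {0..<3} + sum h {3..<n-2} + sum h {n-2..<n}"
    by (rule split3) (use n in linarith)+
  have b1: "real (k-1) \<le> sum h {3..<n-2}"
  proof -
    have "real (k-1) \<le> sum h {3..<3+4*(k-1)}" by (rule block[OF r]) (use n in simp)
    then show ?thesis unfolding eq1 .
  qed
  have l: "1 \<le> sum h {0..<3}" using left_end[OF r] n by simp
  have s2: "sum h {0..<n} = sum h {0..<2} + sum h {2..<n-3} + sum h {n-3..<n}"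
    by (rule split3) (use n in linarith)+
  have b2: "real (k-1) \<le> sum h {2..<n-3}"
  proof -
    have "real (k-1) \<le> sum h {2..<2+4*(k-1)}" by (rule block[OF r]) (use n in simp)
    then show ?thesis unfolding eq2 .
  qed
  have rr: "1 \<le> sum h {n-3..<n}" using right_end[OF r] n by simp
  show ?thesis using e km s1 b1 l s2 b2 rr by linarith
qed

lemma lb_2mod4:
  assumes r: "trunc1_resolving_function {0..<n} path_dist h" and n: "n = 4*k+2" "1 \<le> k"
  shows "real k + 1 \<le> sum h {0..<n}"
proof -
  have km: "real (k-1) = real k - 1" using n(2) by (simp add: of_nat_diff)
  have eq1: "3+4*(k-1) = n-3" using n by simp
  have s1: "sum h {0..<n} = sum h {0..<3} + sum h {3..<n-3} + sum h {n-3..<n}"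
    by (rule split3) (use n in linarith)+
  have b1: "real (k-1) \<le> sum h {3..<n-3}"
  proof -
    have "real (k-1) \<le> sum h {3..<3+4*(k-1)}" by (rule block[OF r]) (use n in simp)
    then show ?thesis unfolding eq1 .
  qed
  have l: "1 \<le> sum h {0..<3}" using left_end[OF r] n by simp
  have rr: "1 \<le> sum h {n-3..<n}" using right_end[OF r] n by simp
  show ?thesis using km s1 b1 l rr by linarith
qed

lemma lb_3mod4:
  assumes r: "trunc1_resolving_function {0..<n} path_dist h" and n: "n = 4*k+3"
  shows "real k + 1 \<le> sum h {0..<n}"
proof -
  have "sum h {0..<n} = sum h {0..<0+4*k} + sum h {n-3..<n}"
    using sum.atLeastLessThan_concat[of 0 "4*k" n h] n by simp
  moreover have "real k \<le> sum h {0..<0+4*k}" by (rule block[OF r]) (use n in simp)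
  moreover have "1 \<le> sum h {n-3..<n}" using right_end[OF r] n by simp
  ultimately show ?thesis by simp
qed

lemma lb_0mod4:
  assumes r: "trunc1_resolving_function {0..<n} path_dist h" and n: "n = 4*k"
  shows "real k \<le> sum h {0..<n}"
  using block[OF r, of 0 k] n by simp


theorem corollary3p12:
  fixes n :: nat
  assumes "n \<ge> 2"
  shows "(n \<in> {2, 3} \<longrightarrow> path_dim1f n = 1)
       \<and> (n \<in> {4, 5} \<longrightarrow> path_dim1f n = (8 - real n) / (7 - real n))
       \<and> (n \<ge> 6 \<and> n mod 4 = 1 \<longrightarrow> path_dim1f n = (real n + 1) / 4)
       \<and> (n \<ge> 6 \<and> (n mod 4 = 2 \<or> n mod 4 = 3) \<longrightarrow> path_dim1f n = of_int \<lceil>real n / 4\<rceil>)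
       \<and> (n \<ge> 8 \<and> n mod 4 = 0 \<longrightarrow> real n / 4 \<le> path_dim1f n \<and> path_dim1f n \<le> (real n + 2) / 4)"
proof (intro conjI impI)
  assume "n \<in> {2, 3}"
  then consider "n = 2" | "n = 3" by auto
  then show "path_dim1f n = 1"
  proof cases
    case 1
    show ?thesis
      by (rule dim_eq[OF even_res[of n]]) (use 1 he_sum[of n] lb_small[of n] in auto)
  next
    case 2
    show ?thesis
      by (rule dim_eq[OF odd_res[of n]]) (use 2 ho_sum[of n] lb_small[of n] in auto)
  qed
next
  assume "n \<in> {4, 5}"
  then consider "n = 4" | "n = 5" by auto
  then show "path_dim1f n = (8 - real n) / (7 - real n)"
  proof cases
    case 1
    have "path_dim1f 4 = 4/3"
      by (rule dim_eq[OF four_res hc_sum]) (rule lb4)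
    then show ?thesis using 1 by simp
  next
    case 2
    have "path_dim1f 5 = 3/2"
      by (rule dim_eq[OF odd_res[of 5]]) (use ho_sum[of 5] lb5 in auto)
    then show ?thesis using 2 by simp
  qed
next
  assume a: "6 \<le> n \<and> n mod 4 = 1"
  define k where "k = n div 4"
  have "n = 4 * k + n mod 4" unfolding k_def by simp
  then have n: "n = 4*k+1" "1 \<le> k" using a unfolding k_def by auto
  have o: "odd n" using n by simp
  show "path_dim1f n = (real n + 1) / 4"
  proof (rule dim_eq[OF odd_res[OF o] ho_sum[OF o]])
    fix h assume "trunc1_resolving_function {0..<n} path_dist h"
    from lb_1mod4[OF this n] show "(real n + 1) / 4 \<le> sum h {0..<n}" using n by simp
  qed
next
  assume a: "6 \<le> n \<and> (n mod 4 = 2 \<or> n mod 4 = 3)"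
  define k where "k = n div 4"
  have c: "\<lceil>real n / 4\<rceil> = int k + 1"
  proof (rule ceiling_unique)
    have "real n = 4 * real k + real (n mod 4)" unfolding k_def
      by (metis div_mult_mod_eq of_nat_add of_nat_mult of_nat_numeral mult.commute)
    then show "real_of_int (int k + 1) - 1 < real n / 4" "real n / 4 \<le> real_of_int (int k + 1)"
      using a by auto
  qed
  have nk: "n = 4 * k + n mod 4" unfolding k_def by simp
  have k1: "1 \<le> k" using a unfolding k_def by auto
  from a nk k1 consider "n = 4*k+2" "1 \<le> k" | "n = 4*k+3" "1 \<le> k" by auto
  then show "path_dim1f n = of_int \<lceil>real n / 4\<rceil>"
  proof cases
    case 1
    have e: "even n" using 1 by simp
    show ?thesis unfolding c
    proof (rule dim_eq[OF even_res[OF e]])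
      show "2 \<le> n" using 1 by simp
      show "sum (he n) {0..<n} = real_of_int (int k + 1)" using he_sum[of n] 1 by simp
      fix h assume "trunc1_resolving_function {0..<n} path_dist h"
      from lb_2mod4[OF this 1] show "real_of_int (int k + 1) \<le> sum h {0..<n}" by simp
    qed
  next
    case 2
    have o: "odd n" using 2 by simp
    show ?thesis unfolding c
    proof (rule dim_eq[OF odd_res[OF o]])
      show "sum ho {0..<n} = real_of_int (int k + 1)" using ho_sum[OF o] 2 by simp
      fix h assume "trunc1_resolving_function {0..<n} path_dist h"
      from lb_3mod4[OF this 2(1)] show "real_of_int (int k + 1) \<le> sum h {0..<n}" by simp
    qed
  qed
next
  assume a: "8 \<le> n \<and> n mod 4 = 0"
  define k where "k = n div 4"
  have n: "n = 4*k" using a unfolding k_def by auto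
  have e: "even n" using n by simp
  show "real n / 4 \<le> path_dim1f n"
  proof (rule dim_ge[OF even_res[OF e]])
    show "2 \<le> n" using a by simp
    fix h assume "trunc1_resolving_function {0..<n} path_dist h"
    from lb_0mod4[OF this n] show "real n / 4 \<le> sum h {0..<n}" using n by simp
  qed
  show "path_dim1f n \<le> (real n + 2) / 4"
    by (rule dim_le[OF even_res[OF e]]) (use a he_sum[of n] in auto)
qed

end
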